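(* Let $c_0,c_1$ be convex loops with length measures $\mu_0,\mu_1$, and suppose that for some $j\in\{0,1\}$ the loop $c_j$ is degenerate with $\mu_j=r\delta_{x_j}+r\delta_{-x_j}$ ($r>0$, $x_j\in S^1$). Let $i$ be the other index and let $\{\pm\,\mathrm{i}x_j\}$ be the two antipodal points of $S^1$ orthogonal to $x_j$. Then $\mu_0,\mu_1$ are admissible if and only if $\{\pm\,\mathrm{i}x_j\}\cap\operatorname{supp}(\mu_i)=\emptyset$.
   Context: $S^1$ is the unit circle in $\mathbb{C}$ (identified with $\mathbb{R}/2\pi\mathbb{Z}$, arc-length measure $\mathrm{d}s$, geodesic distance $\operatorname{dist}$). A convex loop is $c\in W^{1,1}(S^1,\mathbb{C})$ with $c'\neq0$ a.e. whose image is the boundary of a convex set in $\mathbb{C}$, positively oriented; its length measure is $\mu_c:=(T_c)_\#(|c'|\,\mathrm{d}s)$, $T_c=c'/|c'|$. Degenerate means $\mu_c=r\delta_x+r\delta_{-x}$ for some $r>0$, $x\in S^1$. Length measures of convex loops have vanishing first moment. $\ell(\zeta)=-\log(\cos^2\zeta)$ for $\zeta\in[0,\pi/2)$, $+\infty$ for $\zeta\ge\pi/2$. $\mu_0,\mu_1\in\mathcal{M}_+(S^1)$ are admissible if $\max\big(\sup_{x\in\operatorname{supp}\mu_0}\inf_{y\in\operatorname{supp}\mu_1}\ell(\operatorname{dist}(x,y)),\sup_{y\in\operatorname{supp}\mu_1}\inf_{x\in\operatorname{supp}\mu_0}\ell(\operatorname{dist}(x,y))\big)<\infty$. *)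

theory Defs
  imports "HOL-Analysis.Analysis" "HOL-Complex_Analysis.Winding_Numbers"
begin

text \<open>S^1 is identified with the unit circle sphere 0 1 in the complex plane;
  a loop on S^1 = R/2piZ is a 2pi-periodic map c :: real => complex,
  arc-length measure ds is Lebesgue measure on [0, 2pi].\<close>

definition s1dist :: "complex \<Rightarrow> complex \<Rightarrow> real" where
  "s1dist x y = arccos (x \<bullet> y)"

definition ell :: "real \<Rightarrow> ereal" where
  "ell z = (if z < pi / 2 then ereal (- ln ((cos z)\<^sup>2)) else \<infinity>)"

definition W11_loop :: "(real \<Rightarrow> complex) \<Rightarrow> bool" where
  "W11_loop c \<longleftrightarrow> (\<forall>t. c (t + 2 * pi) = c t) \<and>
     (\<exists>g. g absolutely_integrable_on {0..2 * pi} \<and>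
          (\<forall>t\<in>{0..2 * pi}. c t = c 0 + integral {0..t} g))"

text \<open>Positively oriented: winding number 1 around every interior point of the convex set.\<close>
definition convex_loop :: "(real \<Rightarrow> complex) \<Rightarrow> bool" where
  "convex_loop c \<longleftrightarrow> W11_loop c \<and>
     (AE t in lebesgue_on {0..2 * pi}. vector_derivative c (at t) \<noteq> 0) \<and>
     (\<exists>K. convex K \<and> c ` {0..2 * pi} = frontier K \<and>
          (\<forall>z\<in>interior K. winding_number (\<lambda>s. c (2 * pi * s)) z = 1))"

text \<open>Length measure mu_c = (T_c)_# (|c'| ds), T_c = c'/|c'|, a measure on the Borel sets of C
  concentrated on the unit circle.\<close>
definition length_measure :: "(real \<Rightarrow> complex) \<Rightarrow> complex measure" where
  "length_measure c =
     distr (density (lebesgue_on {0..2 * pi}) (\<lambda>t. ennreal (norm (vector_derivative c (at t)))))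
           borel (\<lambda>t. sgn (vector_derivative c (at t)))"

definition supp :: "complex measure \<Rightarrow> complex set" where
  "supp M = {x. \<forall>e>0. emeasure M (ball x e) \<noteq> 0}"

definition admissible :: "complex measure \<Rightarrow> complex measure \<Rightarrow> bool" where
  "admissible M0 M1 \<longleftrightarrow>
     max (SUP x\<in>supp M0. INF y\<in>supp M1. ell (s1dist x y))
         (SUP y\<in>supp M1. INF x\<in>supp M0. ell (s1dist x y)) < \<infinity>"

definition is_two_dirac :: "complex measure \<Rightarrow> real \<Rightarrow> complex \<Rightarrow> bool" where
  "is_two_dirac M r x \<longleftrightarrow>
     (\<forall>A\<in>sets borel. emeasure M A = ennreal r * indicator A x + ennreal r * indicator A (- x))"

definition degenerate :: "(real \<Rightarrow> complex) \<Rightarrow> bool" where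
  "degenerate c \<longleftrightarrow> (\<exists>r>0. \<exists>x\<in>sphere 0 1. is_two_dirac (length_measure c) r x)"

end

theory Submission
  imports Defs
begin


lemma right_quot:
  fixes g :: "real \<Rightarrow> complex"
  assumes g: "g integrable_on {a..b}" and t: "a \<le> t" "t + h \<le> b" and h: "0 < h"
  shows "(integral {a..t+h} g - integral {a..t} g) = integral {t..t+h} g"
proof -
  have "g integrable_on {a..t+h}" using g t h by (intro integrable_on_subinterval[OF g]) auto
  from Henstock_Kurzweil_Integration.integral_combine[OF t(1) _ this] h
  show ?thesis by (auto simp: algebra_simps)
qed

lemma ldt:
  fixes g :: "real \<Rightarrow> complex" and a b :: real
  assumes "g absolutely_integrable_on {a..b}"
  obtains N where "negligible N"
    "\<And>t. t \<in> {a<..<b} - N \<Longrightarrow> ((\<lambda>s. integral {a..s} g) has_vector_derivative g t) (at t)"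
proof -
  have gi: "g integrable_on {a..b}" using assms absolutely_integrable_on_def by blast
  define G where "G s = (if s \<in> {a..b} then g s else 0)" for s
  have GU: "G integrable_on UNIV" unfolding G_def using gi integrable_restrict_UNIV by blast
  have G1: "G integrable_on cbox u v" for u v
    using integrable_on_subinterval[OF GU, of u v] by auto
  have G2: "(\<lambda>s. G (- s)) integrable_on cbox u v" for u v
  proof -
    have "(\<lambda>s. G (- s)) integrable_on cbox (- (- u)) (- (- v))"
      by (rule integrable_reflect[THEN iffD2]) (rule G1)
    then show ?thesis by simp
  qed
  obtain N1 where N1: "negligible N1"
    "\<And>x e. \<lbrakk>x \<notin> N1; 0 < e\<rbrakk> \<Longrightarrow> \<exists>d>0. \<forall>h. 0 < h \<and> h < d \<longrightarrow>
        norm (integral (cbox x (x + h *\<^sub>R One)) G /\<^sub>R h ^ DIM(real) - G x) < e"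
    using integrable_ccontinuous_explicit[of G] G1 by blast
  obtain N2 where N2: "negligible N2"
    "\<And>x e. \<lbrakk>x \<notin> N2; 0 < e\<rbrakk> \<Longrightarrow> \<exists>d>0. \<forall>h. 0 < h \<and> h < d \<longrightarrow>
        norm (integral (cbox x (x + h *\<^sub>R One)) (\<lambda>s. G (- s)) /\<^sub>R h ^ DIM(real) - G (- x)) < e"
    using integrable_ccontinuous_explicit[of "\<lambda>s. G (- s)"] G2 by blast
  have negN2: "negligible (uminus ` N2)"
    by (rule negligible_differentiable_image_negligible[OF _ N2(1)]) (auto intro!: derivative_intros)
  show ?thesis
  proof (rule that[of "N1 \<union> uminus ` N2"])
    show "negligible (N1 \<union> uminus ` N2)" using N1(1) negN2 by auto
  next
    fix t assume tN: "t \<in> {a<..<b} - (N1 \<union> uminus ` N2)"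
    define F where "F s = integral {a..s} g" for s
    have tN1: "t \<notin> N1" and tN2: "- t \<notin> N2" and tab: "a < t" "t < b" using tN by force+
    have Gt: "G t = g t" using tab by (simp add: G_def)
    have lim: "(\<lambda>h. (F (t + h) - F t) /\<^sub>R h) \<midarrow>0\<rightarrow> g t"
      unfolding LIM_eq
    proof (intro allI impI)
      fix e :: real assume e: "e > 0"
      obtain d1 where d1: "d1 > 0" "\<And>h. 0 < h \<Longrightarrow> h < d1 \<Longrightarrow>
        norm (integral (cbox t (t + h *\<^sub>R One)) G /\<^sub>R h ^ DIM(real) - G t) < e"
        using N1(2)[OF tN1 e] by blast
      obtain d2 where d2: "d2 > 0" "\<And>h. 0 < h \<Longrightarrow> h < d2 \<Longrightarrow>
        norm (integral (cbox (-t) (-t + h *\<^sub>R One)) (\<lambda>s. G (- s)) /\<^sub>R h ^ DIM(real) - G (- (-t))) < e"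
        using N2(2)[OF tN2 e] by blast
      show "\<exists>s>0. \<forall>h. h \<noteq> 0 \<and> norm (h - 0) < s \<longrightarrow> norm ((F (t + h) - F t) /\<^sub>R h - g t) < e"
      proof (intro exI[of _ "min (min d1 d2) (min (b - t) (t - a))"] conjI allI impI)
        show "0 < min (min d1 d2) (min (b - t) (t - a))" using d1 d2 tab by auto
        fix h :: real assume h: "h \<noteq> 0 \<and> norm (h - 0) < min (min d1 d2) (min (b - t) (t - a))"
        show "norm ((F (t + h) - F t) /\<^sub>R h - g t) < e"
        proof (cases "h > 0")
          case True
          have eqG: "integral (cbox t (t + h *\<^sub>R One)) G = integral {t..t+h} g"
            using tab h True by (auto simp: G_def intro!: integral_cong)
          have "F (t + h) - F t = integral {t..t+h} g"
            unfolding F_def using right_quot[OF gi, of t h] tab h True by auto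
          then show ?thesis using d1(2)[of h] h True eqG Gt by auto
        next
          case False
          define k where "k = - h"
          have k: "k > 0" "k < d2" "k < t - a" using h False by (auto simp: k_def)
          have eqG: "integral (cbox (-t) (-t + k *\<^sub>R One)) (\<lambda>s. G (- s)) = integral {t-k..t} g"
          proof -
            have "integral (cbox (-t) (-t + k *\<^sub>R One)) (\<lambda>s. G (- s)) = integral {- t..- (t-k)} (\<lambda>s. G (- s))"
              by simp
            also have "\<dots> = integral {t-k..t} G" by (rule Henstock_Kurzweil_Integration.integral_reflect_real)
            also have "\<dots> = integral {t-k..t} g" using tab k by (auto simp: G_def intro!: integral_cong)
            finally show ?thesis .
          qed
          have "F t - F (t - k) = integral {t-k..t} g"
            unfolding F_def using right_quot[OF gi, of "t-k" k] tab k by auto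
          then have "(F (t + h) - F t) /\<^sub>R h = integral {t-k..t} g /\<^sub>R k"
            by (auto simp: k_def) (metis minus_diff_eq scaleR_minus_left scaleR_minus_right)
          then show ?thesis using d2(2)[of k] k eqG Gt by auto
        qed
      qed
    qed
    have "(F has_vector_derivative g t) (at t)"
      unfolding has_vector_derivative_complex_iff DERIV_def
    proof
      show "(\<lambda>h. (Re (F (t + h)) - Re (F t)) / h) \<midarrow>0\<rightarrow> Re (g t)"
        proof -
        have "(\<lambda>h. Re ((F (t + h) - F t) /\<^sub>R h)) = (\<lambda>h. (Re (F (t + h)) - Re (F t)) / h)"
          by (simp add: fun_eq_iff divide_inverse mult.commute)
        then show ?thesis using tendsto_Re[OF lim] by simp
      qed
      show "(\<lambda>h. (Im (F (t + h)) - Im (F t)) / h) \<midarrow>0\<rightarrow> Im (g t)"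
        proof -
        have "(\<lambda>h. Im ((F (t + h) - F t) /\<^sub>R h)) = (\<lambda>h. (Im (F (t + h)) - Im (F t)) / h)"
          by (simp add: fun_eq_iff divide_inverse mult.commute)
        then show ?thesis using tendsto_Im[OF lim] by simp
      qed
    qed
    then show "((\<lambda>s. integral {a..s} g) has_vector_derivative g t) (at t)" by (simp add: F_def[abs_def])
  qed
qed




lemma AE_False_imp:
  assumes "AE x in M. False" shows "emeasure M (space M) = 0"
proof -
  from AE_E[OF assms] obtain N where N: "{x \<in> space M. \<not> False} \<subseteq> N" "emeasure M N = 0" "N \<in> sets M" by blast
  then have "space M \<subseteq> N" by auto
  then have "emeasure M (space M) \<le> emeasure M N" by (intro emeasure_mono) (use N in auto)
  then show ?thesis using \<open>emeasure M N = 0\<close> by simp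
qed

lemma lebesgue_on_02pi_pos: "emeasure (lebesgue_on {0..2*pi}) (space (lebesgue_on {0..2*pi})) \<noteq> 0"
  by (subst emeasure_restrict_space) auto

lemma negligible_AE_on:
  assumes "negligible N" "S \<in> sets lebesgue" shows "AE t in lebesgue_on S. t \<notin> N"
proof (rule AE_I')
  show "N \<inter> space (lebesgue_on S) \<in> null_sets (lebesgue_on S)"
    using assms by (auto simp: null_sets_restrict_space negligible_iff_null_sets intro!: null_set_Int2)
  show "{t \<in> space (lebesgue_on S). \<not> t \<notin> N} \<subseteq> N \<inter> space (lebesgue_on S)" by auto
qed

lemma w11_facts:
  assumes "W11_loop c"
  obtains g N where "g absolutely_integrable_on {0..2*pi}" "negligible N"
    "\<And>t. t \<in> {0..2*pi} - N \<Longrightarrow> vector_derivative c (at t) = g t"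
    "integral {0..2*pi} g = 0"
proof -
  obtain g where g: "g absolutely_integrable_on {0..2 * pi}"
    and cg: "\<And>t. t\<in>{0..2 * pi} \<Longrightarrow> c t = c 0 + integral {0..t} g"
    and per: "c (0 + 2*pi) = c 0"
    using assms unfolding W11_loop_def by blast
  obtain N0 where N0: "negligible N0"
    "\<And>t. t \<in> {0<..<2*pi} - N0 \<Longrightarrow> ((\<lambda>s. integral {0..s} g) has_vector_derivative g t) (at t)"
    using ldt[OF g] by blast
  show ?thesis
  proof (rule that[of g "N0 \<union> {0, 2*pi}"])
    show "g absolutely_integrable_on {0..2 * pi}" by fact
    show "negligible (N0 \<union> {0, 2 * pi})" using N0(1) by auto
    show "integral {0..2 * pi} g = 0" using cg[of "2*pi"] per by simp
    fix t assume t: "t \<in> {0..2 * pi} - (N0 \<union> {0, 2 * pi})"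
    then have t': "t \<in> {0<..<2*pi} - N0" by auto
    have "((\<lambda>s. c 0 + integral {0..s} g) has_vector_derivative g t) (at t)"
      using has_vector_derivative_add[OF has_vector_derivative_const N0(2)[OF t']] by simp
    then have "(c has_vector_derivative g t) (at t)"
      by (rule has_vector_derivative_transform_within_open[of _ _ _ "{0<..<2*pi}"])
         (use t' in auto, metis cg atLeastAtMost_iff greaterThanLessThan_iff less_eq_real_def)
    then show "vector_derivative c (at t) = g t" by (rule vector_derivative_at)
  qed
qed

lemma vd_measurable:
  assumes "W11_loop c"
  shows "(\<lambda>t. vector_derivative c (at t)) \<in> borel_measurable (lebesgue_on {0..2*pi})"
proof -
  obtain g N where g: "g absolutely_integrable_on {0..2*pi}" "negligible N"
    "\<And>t. t \<in> {0..2*pi} - N \<Longrightarrow> vector_derivative c (at t) = g t" "integral {0..2*pi} g = 0"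
    using w11_facts[OF assms] by metis
  have "g measurable_on {0..2*pi}"
  proof -
    have "g \<in> borel_measurable (lebesgue_on {0..2*pi})"
      using absolutely_integrable_measurable[THEN iffD1, OF _ g(1)] by simp
    then show ?thesis by (subst measurable_on_iff_borel_measurable) auto
  qed
  then have "(\<lambda>t. vector_derivative c (at t)) measurable_on {0..2*pi}"
    by (rule measurable_on_spike[OF _ g(2)]) (rule g(3))
  then show ?thesis by (subst (asm) measurable_on_iff_borel_measurable) auto
qed




lemma null_by_balls:
  fixes M :: "complex measure"
  assumes sets: "sets M = sets borel" and H: "\<forall>p\<in>U. \<exists>e>0. emeasure M (ball p e) = 0"
  shows "emeasure M U = 0"
proof -
  obtain E where E: "\<And>p. p \<in> U \<Longrightarrow> E p > 0 \<and> emeasure M (ball p (E p)) = 0"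
    using H by metis
  define F where "F = (\<lambda>p. ball p (E p)) ` U"
  obtain F' where F': "F' \<subseteq> F" "countable F'" "\<Union>F' = \<Union>F"
    using Lindelof[of F] unfolding F_def by auto
  have nul: "(\<Union>B\<in>F'. B) \<in> null_sets M"
  proof (rule null_sets_UN')
    show "countable F'" by fact
    fix B assume "B \<in> F'"
    then obtain p where p: "p \<in> U" "B = ball p (E p)" using F' unfolding F_def by auto
    have "B \<in> sets M" unfolding sets p(2) by simp
    then show "B \<in> null_sets M" using E[OF p(1)] p(2) by (auto intro: null_setsI)
  qed
  have sub: "U \<subseteq> \<Union>F'" using F' E unfolding F_def by auto
  have "(\<Union>B\<in>F'. B) = \<Union>F'" by simp
  then have n2: "\<Union>F' \<in> null_sets M" using nul by simp
  show ?thesis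
    by (rule emeasure_eq_0[OF null_setsD2[OF n2] null_setsD1[OF n2] sub])
qed

lemma supp_disj_null:
  fixes M :: "complex measure"
  assumes sets: "sets M = sets borel" and "U \<inter> supp M = {}"
  shows "emeasure M U = 0"
proof (rule null_by_balls[OF sets], intro ballI)
  fix p assume "p \<in> U"
  then have "p \<notin> supp M" using assms(2) by blast
  then show "\<exists>e>0. emeasure M (ball p e) = 0" unfolding supp_def by simp
qed

lemma supp_closed:
  fixes M :: "complex measure"
  assumes sets: "sets M = sets borel"
  shows "closed (supp M)"
  unfolding closed_def open_contains_ball
proof (intro ballI)
  fix p assume "p \<in> - supp M"
  then obtain e where e: "e > 0" "emeasure M (ball p e) = 0" by (auto simp: supp_def)
  have "q \<notin> supp M" if q: "q \<in> ball p e" for q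
  proof -
    have sub: "ball q (e - dist p q) \<subseteq> ball p e" by (rule ball_subset_ball_iff[THEN iffD2]) (auto simp: dist_commute)
    have bs: "ball p e \<in> sets M" unfolding sets by simp
    have "emeasure M (ball q (e - dist p q)) = 0"
      by (rule emeasure_eq_0[OF bs e(2) sub])
    moreover have "e - dist p q > 0" using q by simp
    ultimately show ?thesis unfolding supp_def by blast
  qed
  then show "\<exists>e>0. ball p e \<subseteq> - supp M" using e by blast
qed

lemma supp_two_dirac:
  fixes M :: "complex measure"
  assumes "is_two_dirac M r x" "r > 0" "x \<noteq> 0"
  shows "supp M = {x, - x}"
proof
  show "supp M \<subseteq> {x, - x}"
  proof
    fix p assume p: "p \<in> supp M"
    show "p \<in> {x, - x}"
    proof (rule ccontr)
      assume "p \<notin> {x, - x}"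
      then have e: "min (dist p x) (dist p (-x)) > 0" by auto
      define B where "B = ball p (min (dist p x) (dist p (-x)))"
      have "B \<in> sets borel" by (simp add: B_def)
      then have "emeasure M B = ennreal r * indicator B x + ennreal r * indicator B (- x)"
        using assms(1) unfolding is_two_dirac_def by blast
      moreover have "x \<notin> B" "-x \<notin> B" by (auto simp: B_def dist_commute)
      ultimately have "emeasure M B = 0" by simp
      then show False using p e unfolding supp_def B_def by blast
    qed
  qed
  show "{x, - x} \<subseteq> supp M"
  proof -
    have "emeasure M (ball y e) \<noteq> 0" if "y \<in> {x, -x}" "e > 0" for y e
    proof -
      have "ball y e \<in> sets borel" by simp
      then have eq: "emeasure M (ball y e) = ennreal r * indicator (ball y e) x + ennreal r * indicator (ball y e) (- x)"
        using assms(1) unfolding is_two_dirac_def by blast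
      have "y \<in> ball y e" using that by simp
      then have "ennreal r * indicator (ball y e) y \<noteq> 0" using assms(2) by simp
      moreover have "ennreal r * indicator (ball y e) y \<le> emeasure M (ball y e)"
        unfolding eq using that by (auto simp: indicator_def)
      ultimately show ?thesis by (metis le_zero_eq)
    qed
    then show ?thesis unfolding supp_def by blast
  qed
qed




lemma lm_emeasure:
  assumes "W11_loop c" "A \<in> sets borel"
  shows "emeasure (length_measure c) A =
    (\<integral>\<^sup>+ t. ennreal (norm (vector_derivative c (at t))) * indicator A (sgn (vector_derivative c (at t)))
      \<partial>lebesgue_on {0..2*pi})"
proof -
  let ?L = "lebesgue_on {0..2*pi}"
  let ?v = "\<lambda>t. vector_derivative c (at t)"
  have vm: "?v \<in> borel_measurable ?L" by (rule vd_measurable[OF assms(1)])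
  have fm: "(\<lambda>t. ennreal (norm (?v t))) \<in> borel_measurable ?L" using vm by measurable
  have sm: "(\<lambda>t. sgn (?v t)) \<in> borel_measurable ?L" using vm by measurable
  have sm': "(\<lambda>t. sgn (?v t)) \<in> density ?L (\<lambda>t. ennreal (norm (?v t))) \<rightarrow>\<^sub>M borel"
    using sm by (simp add: measurable_cong_sets[OF sets_density refl])
  have "emeasure (length_measure c) A =
     emeasure (density ?L (\<lambda>t. ennreal (norm (?v t)))) ((\<lambda>t. sgn (?v t)) -` A \<inter> space ?L)"
    unfolding length_measure_def by (subst emeasure_distr[OF sm' assms(2)]) simp
  also have "\<dots> = (\<integral>\<^sup>+ t. ennreal (norm (?v t)) * indicator ((\<lambda>t. sgn (?v t)) -` A \<inter> space ?L) t \<partial>?L)"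
    by (rule emeasure_density[OF fm]) (use sm assms(2) in measurable)
  also have "\<dots> = (\<integral>\<^sup>+ t. ennreal (norm (?v t)) * indicator A (sgn (?v t)) \<partial>?L)"
    by (rule nn_integral_cong) (auto simp: indicator_def)
  finally show ?thesis .
qed

lemma lm_sets: "sets (length_measure c) = sets borel"
  by (simp add: length_measure_def)

lemma lm_supp_sphere:
  assumes "W11_loop c"
  shows "supp (length_measure c) \<subseteq> sphere 0 1"
proof
  fix p assume p: "p \<in> supp (length_measure c)"
  show "p \<in> sphere 0 1"
  proof (rule ccontr)
    assume np: "p \<notin> sphere 0 1"
    define e where "e = \<bar>1 - norm p\<bar>"
    have e: "e > 0" using np by (auto simp: e_def)
    have dis: "z \<notin> ball p e" if "norm z = 1" for z
    proof
      assume "z \<in> ball p e"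
      then have "dist p z < \<bar>1 - norm p\<bar>" by (simp add: e_def)
      moreover have "\<bar>norm z - norm p\<bar> \<le> dist p z"
        by (metis abs_minus_commute dist_commute dist_norm norm_triangle_ineq3)
      ultimately show False using that by simp
    qed
    have "emeasure (length_measure c) (ball p e) =
      (\<integral>\<^sup>+ t. ennreal (norm (vector_derivative c (at t))) * indicator (ball p e) (sgn (vector_derivative c (at t)))
      \<partial>lebesgue_on {0..2*pi})" by (rule lm_emeasure[OF assms]) simp
    also have "\<dots> = (\<integral>\<^sup>+ t. 0 \<partial>lebesgue_on {0..2*pi})"
    proof (rule nn_integral_cong)
      fix t
      show "ennreal (norm (vector_derivative c (at t))) * indicator (ball p e) (sgn (vector_derivative c (at t))) = 0"
      proof (cases "vector_derivative c (at t) = 0")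
        case False
        then have "norm (sgn (vector_derivative c (at t))) = 1" by (simp add: norm_sgn)
        then show ?thesis using dis by (auto simp: indicator_def)
      qed simp
    qed
    finally have "emeasure (length_measure c) (ball p e) = 0" by simp
    then show False using p e by (auto simp: supp_def)
  qed
qed

lemma lm_supp_nonempty:
  assumes "convex_loop c"
  shows "supp (length_measure c) \<noteq> {}"
proof
  assume S: "supp (length_measure c) = {}"
  have W: "W11_loop c" and AEv: "AE t in lebesgue_on {0..2 * pi}. vector_derivative c (at t) \<noteq> 0"
    using assms by (auto simp: convex_loop_def)
  have vm: "(\<lambda>t. vector_derivative c (at t)) \<in> borel_measurable (lebesgue_on {0..2*pi})"
    by (rule vd_measurable[OF W])
  have "emeasure (length_measure c) UNIV = 0"
    by (rule supp_disj_null[OF lm_sets]) (simp add: S)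
  then have "(\<integral>\<^sup>+ t. ennreal (norm (vector_derivative c (at t))) * indicator UNIV (sgn (vector_derivative c (at t)))
      \<partial>lebesgue_on {0..2*pi}) = 0" using lm_emeasure[OF W, of UNIV] by simp
  then have "(\<integral>\<^sup>+ t. ennreal (norm (vector_derivative c (at t))) \<partial>lebesgue_on {0..2*pi}) = 0" by simp
  then have "AE t in lebesgue_on {0..2*pi}. ennreal (norm (vector_derivative c (at t))) = 0"
    by (subst (asm) nn_integral_0_iff_AE) (use vm in measurable)
  with AEv have "AE t in lebesgue_on {0..2*pi}. False" by eventually_elim simp
  then show False using AE_False_imp lebesgue_on_02pi_pos by blast
qed

lemma ortho: fixes x y :: complex assumes "norm x = 1" "norm y = 1" "x \<bullet> y = 0"
  shows "y = \<i> * x \<or> y = - (\<i> * x)"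
proof -
  define l where "l = Re x * Im y - Im x * Re y"
  have ac: "Re x * Re y + Im x * Im y = 0" using assms(3) by (simp add: inner_complex_def)
  have nx: "(Re x)^2 + (Im x)^2 = 1" using assms(1) by (simp add: cmod_def)
  have ny: "(Re y)^2 + (Im y)^2 = 1" using assms(2) by (simp add: cmod_def)
  have c: "Re y = - Im x * l" unfolding l_def using ac nx by algebra
  have d: "Im y = Re x * l" unfolding l_def using ac nx by algebra
  have "l^2 = 1" using c d nx ny by algebra
  then have "l = 1 \<or> l = -1" by (simp add: power2_eq_1_iff)
  then show ?thesis using c d by (auto simp: complex_eq_iff)
qed

lemma lm_supp_halfplane:
  assumes "convex_loop c" and x: "norm x = 1"
    and no: "\<i> * x \<notin> supp (length_measure c)" "- (\<i> * x) \<notin> supp (length_measure c)"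
  shows "\<exists>y\<in>supp (length_measure c). 0 < x \<bullet> y"
proof (rule ccontr)
  assume H: "\<not> (\<exists>y\<in>supp (length_measure c). 0 < x \<bullet> y)"
  let ?L = "lebesgue_on {0..2*pi}"
  let ?v = "\<lambda>t. vector_derivative c (at t)"
  have W: "W11_loop c" and AEv: "AE t in ?L. ?v t \<noteq> 0"
    using assms by (auto simp: convex_loop_def)
  have vm: "?v \<in> borel_measurable ?L" by (rule vd_measurable[OF W])
  define C where "C = {y. 0 \<le> x \<bullet> y}"
  have Cc: "closed C" unfolding C_def by (intro closed_Collect_le continuous_intros)
  have "C \<inter> supp (length_measure c) = {}"
  proof (safe)
    fix y assume y: "y \<in> C" "y \<in> supp (length_measure c)"
    then have "norm y = 1" using lm_supp_sphere[OF W] by auto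
    moreover have "x \<bullet> y = 0" using y H by (force simp: C_def)
    ultimately show "y \<in> {}" using ortho[OF x] no y by blast
  qed
  then have "emeasure (length_measure c) C = 0" by (rule supp_disj_null[OF lm_sets])
  then have "(\<integral>\<^sup>+ t. ennreal (norm (?v t)) * indicator C (sgn (?v t)) \<partial>?L) = 0"
    using lm_emeasure[OF W, of C] Cc by (simp add: borel_closed)
  then have "AE t in ?L. ennreal (norm (?v t)) * indicator C (sgn (?v t)) = 0"
    proof -
    have sm: "(\<lambda>t. sgn (?v t)) \<in> borel_measurable ?L" using vm by measurable
    have ic: "(\<lambda>t. indicator C (sgn (?v t)) :: ennreal) \<in> borel_measurable ?L"
      using measurable_compose[OF sm borel_measurable_indicator[OF borel_closed[OF Cc]]] by (simp add: o_def)
    have mC: "(\<lambda>t. ennreal (norm (?v t)) * indicator C (sgn (?v t))) \<in> borel_measurable ?L"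
      using vm ic by measurable
    show ?thesis using nn_integral_0_iff_AE[OF mC] \<open>(\<integral>\<^sup>+ t. ennreal (norm (?v t)) * indicator C (sgn (?v t)) \<partial>?L) = 0\<close> by simp
  qed
  with AEv have AE1: "AE t in ?L. x \<bullet> ?v t < 0"
  proof eventually_elim
    case (elim t)
    then have "sgn (?v t) \<notin> C" by (auto simp: indicator_def split: if_splits)
    then have "x \<bullet> sgn (?v t) < 0" by (simp add: C_def)
    moreover have "x \<bullet> sgn (?v t) = (x \<bullet> ?v t) / norm (?v t)"
      by (simp add: sgn_div_norm inner_scaleR_right divide_inverse mult.commute)
    moreover have "norm (?v t) > 0" using elim by simp
    ultimately show ?case by (simp add: divide_less_0_iff)
  qed
  obtain g N where g: "g absolutely_integrable_on {0..2*pi}" "negligible N"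
    "\<And>t. t \<in> {0..2*pi} - N \<Longrightarrow> ?v t = g t" "integral {0..2*pi} g = 0"
    using w11_facts[OF W] by metis
  have AEN: "AE t in ?L. t \<notin> N" by (rule negligible_AE_on[OF g(2)]) simp
  have AES: "AE t in ?L. t \<in> {0..2*pi}" using AE_space[of ?L] by simp
  have AE2: "AE t in ?L. x \<bullet> g t < 0"
    using AE1 AEN AES
  proof (eventually_elim)
    case (elim t)
    then show ?case using g(3)[of t] by simp
  qed
  have gint: "integrable ?L g" by (rule absolutely_integrable_imp_integrable[OF g(1)]) simp
  have int: "integrable ?L (\<lambda>t. - (x \<bullet> g t))"
    using integrable_inner_right[of x ?L g] gint by simp
  have "integral\<^sup>L ?L (\<lambda>t. - (x \<bullet> g t)) = - (x \<bullet> integral\<^sup>L ?L g)"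
    using integral_inner_right[of x ?L g] gint by simp
  also have "integral\<^sup>L ?L g = integral {0..2*pi} g"
    by (rule lebesgue_integral_eq_integral[OF gint]) simp
  finally have I0: "integral\<^sup>L ?L (\<lambda>t. - (x \<bullet> g t)) = 0" using g(4) by simp
  have "(\<integral>\<^sup>+ t. ennreal (- (x \<bullet> g t)) \<partial>?L) = ennreal (integral\<^sup>L ?L (\<lambda>t. - (x \<bullet> g t)))"
    by (rule nn_integral_eq_integral[OF int]) (use AE2 in \<open>eventually_elim, simp\<close>)
  then have "(\<integral>\<^sup>+ t. ennreal (- (x \<bullet> g t)) \<partial>?L) = 0" using I0 by simp
  then have "AE t in ?L. ennreal (- (x \<bullet> g t)) = 0"
    by (subst (asm) nn_integral_0_iff_AE) (use borel_measurable_integrable[OF int] in measurable)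
  with AE2 have "AE t in ?L. False" by eventually_elim simp
  then show False using AE_False_imp lebesgue_on_02pi_pos by blast
qed




lemma ell_s1dist:
  fixes a b :: complex
  assumes "norm a = 1" "norm b = 1"
  shows "ell (s1dist a b) = (if 0 < a \<bullet> b then ereal (- ln ((a \<bullet> b)^2)) else \<infinity>)"
proof -
  let ?u = "a \<bullet> b"
  have u: "\<bar>?u\<bar> \<le> 1" using Cauchy_Schwarz_ineq2[of a b] assms by simp
  then have u1: "-1 \<le> ?u" "?u \<le> 1" by auto
  show ?thesis
  proof (cases "0 < ?u")
    case True
    have "arccos ?u < arccos 0" by (rule arccos_less_arccos) (use True u1 in auto)
    then have "arccos ?u < pi / 2" by simp
    moreover have "cos (arccos ?u) = ?u" by (rule cos_arccos) (use u1 in auto)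
    ultimately show ?thesis using True by (simp add: ell_def s1dist_def)
  next
    case False
    have "arccos 0 \<le> arccos ?u" by (rule arccos_le_arccos) (use False u1 in auto)
    then have "\<not> arccos ?u < pi / 2" by simp
    then show ?thesis using False by (simp add: ell_def s1dist_def)
  qed
qed

lemma s1dist_sym: "s1dist a b = s1dist b a"
  by (simp add: s1dist_def inner_commute)

lemma inner_ix: "x \<bullet> (\<i> * x) = 0" "x \<bullet> (- (\<i> * x)) = 0"
  by (simp_all add: inner_complex_def algebra_simps)

lemma keyA:
  fixes S :: "complex set"
  assumes S: "S \<subseteq> sphere 0 1" "closed S" and x: "norm x = 1"
  shows "(SUP y\<in>S. INF a\<in>{x, - x}. ell (s1dist a y)) < \<infinity> \<longleftrightarrow> \<i> * x \<notin> S \<and> - (\<i> * x) \<notin> S"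
proof
  assume L: "(SUP y\<in>S. INF a\<in>{x, - x}. ell (s1dist a y)) < \<infinity>"
  have "y \<notin> S" if y: "y = \<i> * x \<or> y = - (\<i> * x)" for y
  proof
    assume yS: "y \<in> S"
    have ny: "norm y = 1" using y x by (auto simp: norm_mult)
    have "x \<bullet> y = 0" "(- x) \<bullet> y = 0" using y inner_ix[of x] by auto
    then have "ell (s1dist x y) = \<infinity>" "ell (s1dist (- x) y) = \<infinity>"
      using ell_s1dist[OF x ny] ell_s1dist[of "-x" y] x ny by auto
    then have "(INF a\<in>{x, - x}. ell (s1dist a y)) = \<infinity>" by simp
    moreover have "(INF a\<in>{x, - x}. ell (s1dist a y)) \<le> (SUP y\<in>S. INF a\<in>{x, - x}. ell (s1dist a y))"
      using yS by (rule SUP_upper)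
    ultimately show False using L by simp
  qed
  then show "\<i> * x \<notin> S \<and> - (\<i> * x) \<notin> S" by blast
next
  assume R: "\<i> * x \<notin> S \<and> - (\<i> * x) \<notin> S"
  show "(SUP y\<in>S. INF a\<in>{x, - x}. ell (s1dist a y)) < \<infinity>"
  proof (cases "S = {}")
    case True then show ?thesis by (simp add: bot_ereal_def)
  next
    case False
    have cS: "compact S" using S by (meson bounded_subset bounded_sphere compact_eq_bounded_closed)
    obtain y0 where y0: "y0 \<in> S" "\<And>y. y \<in> S \<Longrightarrow> \<bar>x \<bullet> y0\<bar> \<le> \<bar>x \<bullet> y\<bar>"
    proof -
      have "continuous_on S (\<lambda>y. \<bar>x \<bullet> y\<bar>)" by (intro continuous_intros)
      then show ?thesis using continuous_attains_inf[OF cS False, of "\<lambda>y. \<bar>x \<bullet> y\<bar>"] that by blast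
    qed
    define d where "d = \<bar>x \<bullet> y0\<bar>"
    have "x \<bullet> y0 \<noteq> 0"
    proof
      assume "x \<bullet> y0 = 0"
      moreover have "norm y0 = 1" using y0(1) S(1) by auto
      ultimately have "y0 = \<i> * x \<or> y0 = - (\<i> * x)" using ortho[OF x] by blast
      then show False using R y0(1) by auto
    qed
    then have d: "d > 0" by (simp add: d_def)
    have "(INF a\<in>{x, - x}. ell (s1dist a y)) \<le> ereal (- ln (d^2))" if y: "y \<in> S" for y
    proof -
      have ny: "norm y = 1" using y S(1) by auto
      have dy: "d \<le> \<bar>x \<bullet> y\<bar>" using y0(2)[OF y] by (simp add: d_def)
      have lnle: "- ln ((x \<bullet> y)^2) \<le> - ln (d^2)"
      proof -
        have "d^2 \<le> (x \<bullet> y)^2" using dy d by (metis abs_le_square_iff abs_of_pos less_imp_le)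
        then have "ln (d^2) \<le> ln ((x \<bullet> y)^2)" using d by (intro ln_mono) auto
        then show ?thesis by simp
      qed
      show ?thesis
      proof (cases "0 < x \<bullet> y")
        case True
        have "(INF a\<in>{x, - x}. ell (s1dist a y)) \<le> ell (s1dist x y)" by (rule INF_lower) simp
        also have "\<dots> = ereal (- ln ((x \<bullet> y)^2))" using ell_s1dist[OF x ny] True by simp
        also have "\<dots> \<le> ereal (- ln (d^2))" using lnle by simp
        finally show ?thesis .
      next
        case False
        then have pos: "0 < (- x) \<bullet> y" using dy d by auto
        have nmx: "norm (- x) = 1" using x by simp
        have "(INF a\<in>{x, - x}. ell (s1dist a y)) \<le> ell (s1dist (- x) y)" by (rule INF_lower) simp
        also have "\<dots> = ereal (- ln ((x \<bullet> y)^2))" using ell_s1dist[OF nmx ny] pos by simp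
        also have "\<dots> \<le> ereal (- ln (d^2))" using lnle by simp
        finally show ?thesis .
      qed
    qed
    then have "(SUP y\<in>S. INF a\<in>{x, - x}. ell (s1dist a y)) \<le> ereal (- ln (d^2))"
      by (rule SUP_least)
    then show ?thesis by (rule order.strict_trans1) simp
  qed
qed

lemma keyB:
  fixes S :: "complex set"
  assumes S: "S \<subseteq> sphere 0 1" and x: "norm x = 1"
    and p: "\<exists>y\<in>S. 0 < x \<bullet> y" and m: "\<exists>y\<in>S. 0 < (- x) \<bullet> y"
  shows "(SUP a\<in>{x, - x}. INF y\<in>S. ell (s1dist a y)) < \<infinity>"
proof -
  have fin: "(INF y\<in>S. ell (s1dist a y)) < \<infinity>" if a: "norm a = 1" "\<exists>y\<in>S. 0 < a \<bullet> y" for a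
  proof -
    obtain y where y: "y \<in> S" "0 < a \<bullet> y" using a by blast
    have ny: "norm y = 1" using y S by auto
    have "(INF y\<in>S. ell (s1dist a y)) \<le> ell (s1dist a y)" by (rule INF_lower[OF y(1)])
    also have "\<dots> = ereal (- ln ((a \<bullet> y)^2))" using ell_s1dist[OF a(1) ny] y by simp
    finally have "(INF y\<in>S. ell (s1dist a y)) \<le> ereal (- ln ((a \<bullet> y)^2))" .
    then show ?thesis by (rule order.strict_trans1) simp
  qed
  have "norm (- x) = 1" using x by simp
  then have B: "(INF y\<in>S. ell (s1dist (- x) y)) < \<infinity>" using fin[of "-x"] m by blast
  have A: "(INF y\<in>S. ell (s1dist x y)) < \<infinity>" using fin[OF x p] .
  have eq: "(SUP a\<in>{x, - x}. INF y\<in>S. ell (s1dist a y)) = max (INF y\<in>S. ell (s1dist x y)) (INF y\<in>S. ell (s1dist (- x) y))"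
    by (simp add: sup_max)
  show ?thesis unfolding eq using A B by (simp only: max_less_iff_conj)
qed




lemma main_equiv:
  fixes Mi Mj :: "complex measure" and x :: complex
  assumes ci: "convex_loop ci" and Mi: "Mi = length_measure ci"
    and Tj: "supp Mj = {x, - x}" and x: "norm x = 1"
  shows "(SUP y\<in>supp Mi. INF a\<in>supp Mj. ell (s1dist a y)) < \<infinity> \<and>
         (SUP a\<in>supp Mj. INF y\<in>supp Mi. ell (s1dist a y)) < \<infinity>
     \<longleftrightarrow> {\<i> * x, - (\<i> * x)} \<inter> supp Mi = {}"
proof -
  have W: "W11_loop ci" using ci by (simp add: convex_loop_def)
  let ?S = "supp Mi"
  have S1: "?S \<subseteq> sphere 0 1" unfolding Mi by (rule lm_supp_sphere[OF W])
  have S2: "closed ?S" unfolding Mi by (rule supp_closed[OF lm_sets])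
  have KA: "(SUP y\<in>?S. INF a\<in>{x, - x}. ell (s1dist a y)) < \<infinity> \<longleftrightarrow> \<i> * x \<notin> ?S \<and> - (\<i> * x) \<notin> ?S"
    by (rule keyA[OF S1 S2 x])
  show ?thesis
  proof
    assume "(SUP y\<in>supp Mi. INF a\<in>supp Mj. ell (s1dist a y)) < \<infinity> \<and>
         (SUP a\<in>supp Mj. INF y\<in>supp Mi. ell (s1dist a y)) < \<infinity>"
    then show "{\<i> * x, - (\<i> * x)} \<inter> supp Mi = {}" using KA Tj by auto
  next
    assume R: "{\<i> * x, - (\<i> * x)} \<inter> supp Mi = {}"
    then have n1: "\<i> * x \<notin> ?S" and n2: "- (\<i> * x) \<notin> ?S" by auto
    have p: "\<exists>y\<in>?S. 0 < x \<bullet> y" unfolding Mi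
      by (rule lm_supp_halfplane[OF ci x]) (use n1 n2 Mi in auto)
    have nx: "norm (- x) = 1" using x by simp
    have m: "\<exists>y\<in>?S. 0 < (- x) \<bullet> y" unfolding Mi
      by (rule lm_supp_halfplane[OF ci nx]) (use n1 n2 Mi in auto)
    have "(SUP a\<in>{x, - x}. INF y\<in>?S. ell (s1dist a y)) < \<infinity>"
      by (rule keyB[OF S1 x p m])
    then show "(SUP y\<in>supp Mi. INF a\<in>supp Mj. ell (s1dist a y)) < \<infinity> \<and>
         (SUP a\<in>supp Mj. INF y\<in>supp Mi. ell (s1dist a y)) < \<infinity>"
      using KA n1 n2 Tj by auto
  qed
qed

theorem lemma3p2:
  fixes c :: "nat \<Rightarrow> real \<Rightarrow> complex" and j i :: nat and r :: real and x :: complex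
  assumes "convex_loop (c 0)" and "convex_loop (c 1)"
    and "j \<in> {0, 1}" and "i = 1 - j"
    and "r > 0" and "x \<in> sphere 0 1"
    and "is_two_dirac (length_measure (c j)) r x"
  shows "admissible (length_measure (c 0)) (length_measure (c 1)) \<longleftrightarrow>
           {\<i> * x, - (\<i> * x)} \<inter> supp (length_measure (c i)) = {}"
proof -
  have x: "norm x = 1" using assms(6) by simp
  have Tj: "supp (length_measure (c j)) = {x, - x}"
    by (rule supp_two_dirac[OF assms(7) assms(5)]) (use x in auto)
  have ci: "convex_loop (c i)" using assms(1-4) by auto
  note eqv = main_equiv[OF ci refl Tj x]
  consider "j = 0" "i = 1" | "j = 1" "i = 0" using assms(3,4) by auto
  then show ?thesis
  proof cases
    case 1
    have "admissible (length_measure (c 0)) (length_measure (c 1)) \<longleftrightarrow>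
      max (SUP a\<in>supp (length_measure (c j)). INF y\<in>supp (length_measure (c i)). ell (s1dist a y))
          (SUP y\<in>supp (length_measure (c i)). INF a\<in>supp (length_measure (c j)). ell (s1dist a y)) < \<infinity>"
      unfolding admissible_def using 1 by simp
    then show ?thesis using eqv unfolding max_less_iff_conj by blast
  next
    case 2
    have "admissible (length_measure (c 0)) (length_measure (c 1)) \<longleftrightarrow>
      max (SUP y\<in>supp (length_measure (c i)). INF a\<in>supp (length_measure (c j)). ell (s1dist y a))
          (SUP a\<in>supp (length_measure (c j)). INF y\<in>supp (length_measure (c i)). ell (s1dist y a)) < \<infinity>"
      unfolding admissible_def using 2 by simp
    moreover have "(\<lambda>y. INF a\<in>supp (length_measure (c j)). ell (s1dist y a)) = (\<lambda>y. INF a\<in>supp (length_measure (c j)). ell (s1dist a y))"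
      by (simp add: s1dist_sym)
    moreover have "(\<lambda>a. INF y\<in>supp (length_measure (c i)). ell (s1dist y a)) = (\<lambda>a. INF y\<in>supp (length_measure (c i)). ell (s1dist a y))"
      by (simp add: s1dist_sym)
    ultimately show ?thesis using eqv unfolding max_less_iff_conj by (simp only:)
  qed
qed


end
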